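(* Let $G=C(n;\{1,2,\dots,k\})$, where $n\geq 4$ and $1\leq k<\lfloor n/2\rfloor$. Then $G$ is a hypo-unique domination graph if and only if $2k+1$ divides $n-1$. If $2k+1$ divides $n-1$, then $n=|V(G)|=(\Delta(G)+1)(\gamma(G)-1)+1$ and $G$ is a hypo-efficient domination graph.
   Context: All graphs are finite, simple and undirected. The circulant graph $C(n;\{1,\dots,k\})$ has vertex set $\{0,1,\dots,n-1\}$, with $i$ adjacent to $i\pm 1,\dots,i\pm k \pmod n$. For $v\in V(G)$, $N[v]$ is the closed neighborhood of $v$. A set $D\subseteq V(G)$ is dominating if every vertex of $G$ not in $D$ has a neighbor in $D$; $\gamma(G)$ is the minimum size of a dominating set, and a dominating set of size $\gamma(G)$ is a $\gamma$-set. A set $D\subseteq V(H)$ is an efficient dominating set (EDS) of $H$ if $|N_H[v]\cap D|=1$ for every $v\in V(H)$. $G$ is a hypo-efficient domination graph if $G$ has no EDS but $G-v$ has at least one EDS for every $v\in V(G)$. $G$ is a hypo-unique domination graph if $G$ has at least two $\gamma$-sets but $G-v$ has exactly one $\gamma$-set for every $v\in V(G)$. $\Delta(G)$ is the maximum degree. *)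

theory Defs
  imports Main
begin

type_synonym 'a graph = "'a set \<times> ('a \<Rightarrow> 'a \<Rightarrow> bool)"

definition verts :: "'a graph \<Rightarrow> 'a set" where "verts G = fst G"
definition adj :: "'a graph \<Rightarrow> 'a \<Rightarrow> 'a \<Rightarrow> bool" where "adj G = snd G"

definition closed_nbhd :: "'a graph \<Rightarrow> 'a \<Rightarrow> 'a set" where
  "closed_nbhd G v = {u \<in> verts G. u = v \<or> adj G v u}"

definition dominating :: "'a graph \<Rightarrow> 'a set \<Rightarrow> bool" where
  "dominating G D \<longleftrightarrow> D \<subseteq> verts G \<and> (\<forall>v \<in> verts G - D. \<exists>u \<in> D. adj G v u)"

definition domination_number :: "'a graph \<Rightarrow> nat" where
  "domination_number G = Min {card D | D. dominating G D}"

definition gamma_set :: "'a graph \<Rightarrow> 'a set \<Rightarrow> bool" where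
  "gamma_set G D \<longleftrightarrow> dominating G D \<and> card D = domination_number G"

definition efficient_dominating :: "'a graph \<Rightarrow> 'a set \<Rightarrow> bool" where
  "efficient_dominating G D \<longleftrightarrow> D \<subseteq> verts G \<and> (\<forall>v \<in> verts G. card (closed_nbhd G v \<inter> D) = 1)"

definition delete_vertex :: "'a graph \<Rightarrow> 'a \<Rightarrow> 'a graph" where
  "delete_vertex G v = (verts G - {v}, \<lambda>x y. adj G x y \<and> x \<noteq> v \<and> y \<noteq> v)"

definition hypo_efficient :: "'a graph \<Rightarrow> bool" where
  "hypo_efficient G \<longleftrightarrow> \<not> (\<exists>D. efficient_dominating G D) \<and>
     (\<forall>v \<in> verts G. \<exists>D. efficient_dominating (delete_vertex G v) D)"

definition hypo_unique :: "'a graph \<Rightarrow> bool" where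
  "hypo_unique G \<longleftrightarrow> (\<exists>D1 D2. D1 \<noteq> D2 \<and> gamma_set G D1 \<and> gamma_set G D2) \<and>
     (\<forall>v \<in> verts G. \<exists>!D. gamma_set (delete_vertex G v) D)"

definition degree :: "'a graph \<Rightarrow> 'a \<Rightarrow> nat" where
  "degree G v = card {u \<in> verts G. adj G v u}"

definition max_degree :: "'a graph \<Rightarrow> nat" where
  "max_degree G = Max (degree G ` verts G)"

definition circulant :: "nat \<Rightarrow> nat \<Rightarrow> nat graph" where
  "circulant n k = ({0..<n}, \<lambda>i j. i < n \<and> j < n \<and> i \<noteq> j \<and>
      (\<exists>d \<in> {1..k}. (i + d) mod n = j \<or> (j + d) mod n = i))"

end

theory Submission
  imports Defs
begin


definition lc :: "nat \<Rightarrow> nat \<Rightarrow> nat \<Rightarrow> nat \<Rightarrow> bool" where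
  "lc n k a b \<longleftrightarrow> (a \<le> b + k \<and> b \<le> a + k) \<or> a + n \<le> b + k \<or> b + n \<le> a + k"

lemma mod_lt2: "(x::nat) < 2*n \<Longrightarrow> x mod n = (if x < n then x else x - n)"
proof (cases "x < n")
  case False
  assume "x < 2*n"
  then have "x - n < n" using False by simp
  then show ?thesis using False by (simp add: le_mod_geq)
qed simp

lemma adj_circ:
  assumes "a < n" "b < n" "k < n"
  shows "adj (circulant n k) a b \<longleftrightarrow> a \<noteq> b \<and> lc n k a b"
proof -
  have "adj (circulant n k) a b \<longleftrightarrow> a \<noteq> b \<and>
     (\<exists>d. 1 \<le> d \<and> d \<le> k \<and> ((if a + d < n then a + d else a + d - n) = b \<or>
        (if b + d < n then b + d else b + d - n) = a))"
  proof -
    have "adj (circulant n k) a b \<longleftrightarrow> a \<noteq> b \<and> (\<exists>d\<in>{1..k}. (a+d) mod n = b \<or> (b+d) mod n = a)"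
      using assms by (simp add: adj_def circulant_def)
    moreover have "\<And>d. d \<in> {1..k} \<Longrightarrow> (a+d) mod n = (if a + d < n then a + d else a + d - n) \<and> (b+d) mod n = (if b + d < n then b + d else b + d - n)"
      using assms by (intro conjI mod_lt2) auto
    ultimately show ?thesis by (metis (no_types, lifting) atLeastAtMost_iff)
  qed
  also have "\<dots> \<longleftrightarrow> a \<noteq> b \<and> lc n k a b"
  proof
    assume "a \<noteq> b \<and> (\<exists>d. 1 \<le> d \<and> d \<le> k \<and> ((if a + d < n then a + d else a + d - n) = b \<or>
        (if b + d < n then b + d else b + d - n) = a))"
    then obtain d where "a \<noteq> b" "1 \<le> d" "d \<le> k" "(if a + d < n then a + d else a + d - n) = b \<or>
        (if b + d < n then b + d else b + d - n) = a" by blast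
    then show "a \<noteq> b \<and> lc n k a b" unfolding lc_def by (simp split: if_splits; elim disjE; arith)
  next
    assume H: "a \<noteq> b \<and> lc n k a b"
    show "a \<noteq> b \<and> (\<exists>d. 1 \<le> d \<and> d \<le> k \<and> ((if a + d < n then a + d else a + d - n) = b \<or>
        (if b + d < n then b + d else b + d - n) = a))"
    proof (cases "a \<le> b + k \<and> b \<le> a + k")
      case True
      show ?thesis
      proof (cases "a < b")
        case True
        then show ?thesis using H \<open>a \<le> b + k \<and> b \<le> a + k\<close> assms
          by (intro conjI exI[of _ "b - a"]) auto
      next
        case False
        then show ?thesis using H \<open>a \<le> b + k \<and> b \<le> a + k\<close> assms
          by (intro conjI exI[of _ "a - b"]) auto
      qed
    next
      case False
      then have "a + n \<le> b + k \<or> b + n \<le> a + k" using H by (auto simp: lc_def)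
      then show ?thesis
      proof
        assume "a + n \<le> b + k"
        then show ?thesis using H assms by (intro conjI exI[of _ "a + n - b"]) auto
      next
        assume "b + n \<le> a + k"
        then show ?thesis using H assms by (intro conjI exI[of _ "b + n - a"]) auto
      qed
    qed
  qed
  finally show ?thesis .
qed

lemma verts_circ: "verts (circulant n k) = {0..<n}"
  by (simp add: verts_def circulant_def)

lemma adj_circ_sym: "adj (circulant n k) a b = adj (circulant n k) b a"
  unfolding adj_def circulant_def by auto

lemma verts_del: "verts (delete_vertex G v) = verts G - {v}"
  by (simp add: verts_def delete_vertex_def)

lemma adj_del: "adj (delete_vertex G v) x y = (adj G x y \<and> x \<noteq> v \<and> y \<noteq> v)"
  by (simp add: adj_def delete_vertex_def)

lemma nbhd_del: "u \<noteq> v \<Longrightarrow> closed_nbhd (delete_vertex G v) u = closed_nbhd G u - {v}"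
  unfolding closed_nbhd_def verts_del adj_del by auto

lemma nbhd_circ:
  assumes "a < n" "k < n"
  shows "closed_nbhd (circulant n k) a = {b. b < n \<and> lc n k a b}"
proof -
  have "lc n k a a" by (simp add: lc_def)
  then show ?thesis using assms unfolding closed_nbhd_def verts_circ
    by (auto simp: adj_circ)
qed

lemma card_nbhd_circ:
  assumes "a < n" "2*k < n"
  shows "card (closed_nbhd (circulant n k) a) = 2*k+1"
proof -
  have N: "closed_nbhd (circulant n k) a = {b. b < n \<and> lc n k a b}"
    using assms by (intro nbhd_circ) auto
  consider "k \<le> a \<and> a + k < n" | "a < k" | "n \<le> a + k" by linarith
  then show ?thesis
  proof cases
    case 1
    then have "{b. b < n \<and> lc n k a b} = {a-k..a+k}" using assms
      by (auto simp: lc_def)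
    then show ?thesis using N 1 by simp
  next
    case 2
    then have "{b. b < n \<and> lc n k a b} = {0..a+k} \<union> {a+n-k..<n}" using assms
      by (auto simp: lc_def)
    moreover have "card ({0..a+k} \<union> {a+n-k..<n}) = card {0..a+k} + card {a+n-k..<n}"
      using assms 2 by (intro card_Un_disjoint) auto
    ultimately show ?thesis using N 2 assms by simp
  next
    case 3
    then have "{b. b < n \<and> lc n k a b} = {a-k..<n} \<union> {0..a+k-n}" using assms
      by (auto simp: lc_def)
    moreover have "card ({a-k..<n} \<union> {0..a+k-n}) = card {a-k..<n} + card {0..a+k-n}"
      using assms 3 by (intro card_Un_disjoint) auto
    ultimately show ?thesis using N 3 assms by simp
  qed
qed

lemma dom_cover:
  assumes "dominating H D" "\<And>x y. adj H x y \<Longrightarrow> adj H y x"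
  shows "verts H \<subseteq> (\<Union>u\<in>D. closed_nbhd H u)"
proof
  fix x assume x: "x \<in> verts H"
  show "x \<in> (\<Union>u\<in>D. closed_nbhd H u)"
  proof (cases "x \<in> D")
    case True then show ?thesis using x by (auto simp: closed_nbhd_def)
  next
    case False
    then obtain u where "u \<in> D" "adj H x u" using assms(1) x by (auto simp: dominating_def)
    then show ?thesis using x assms(2) by (auto simp: closed_nbhd_def)
  qed
qed

lemma dom_card:
  assumes "dominating H D" "\<And>x y. adj H x y \<Longrightarrow> adj H y x" "finite (verts H)"
  shows "card (verts H) \<le> (\<Sum>u\<in>D. card (closed_nbhd H u))"
proof -
  have "finite D" using assms(1,3) by (auto simp: dominating_def intro: finite_subset)
  have "card (verts H) \<le> card (\<Union>u\<in>D. closed_nbhd H u)"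
    using dom_cover[OF assms(1,2)] \<open>finite D\<close> assms(3)
    by (intro card_mono) (auto simp: closed_nbhd_def)
  also have "\<dots> \<le> (\<Sum>u\<in>D. card (closed_nbhd H u))" using \<open>finite D\<close> by (rule card_UN_le)
  finally show ?thesis .
qed

lemma domnum_eq:
  assumes "finite (verts H)" "dominating H D0" "card D0 = c"
    "\<And>D. dominating H D \<Longrightarrow> c \<le> card D"
  shows "domination_number H = c"
proof -
  have "{card D | D. dominating H D} \<subseteq> {..card (verts H)}"
    using assms(1) by (auto simp: dominating_def intro: card_mono)
  then have "finite {card D | D. dominating H D}" using finite_subset by blast
  then show ?thesis unfolding domination_number_def
    using assms by (intro Min_eqI) auto
qed

lemma sob: "finite A \<Longrightarrow> (\<Sum>x\<in>A. (of_bool (P x)::nat)) = card (A \<inter> {x. P x})"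
proof (induction rule: finite_induct)
  case (insert a F)
  then show ?case by (cases "P a") (auto simp: Int_insert_left)
qed simp

lemma double_count:
  assumes "finite V" "finite D" "\<And>u. u \<in> D \<Longrightarrow> N u \<subseteq> V"
  shows "(\<Sum>u\<in>D. card (N u)) = (\<Sum>x\<in>V. card (D \<inter> {u. x \<in> N u}))"
proof -
  have "(\<Sum>u\<in>D. card (N u)) = (\<Sum>u\<in>D. \<Sum>x\<in>V. (of_bool (x \<in> N u) :: nat))"
  proof (rule sum.cong)
    fix u assume "u \<in> D"
    then have e: "V \<inter> {x. x \<in> N u} = N u" using assms(3) by auto
    have "(\<Sum>x\<in>V. (of_bool (x \<in> N u) :: nat)) = card (V \<inter> {x. x \<in> N u})"
      using sob[OF assms(1), of "\<lambda>x. x \<in> N u"] by simp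
    then show "card (N u) = (\<Sum>x\<in>V. (of_bool (x \<in> N u) :: nat))"
      using e by simp
  qed simp
  also have "\<dots> = (\<Sum>x\<in>V. \<Sum>u\<in>D. (of_bool (x \<in> N u) :: nat))" by (rule sum.swap)
  also have "\<dots> = (\<Sum>x\<in>V. card (D \<inter> {u. x \<in> N u}))"
  proof (rule sum.cong)
    fix x
    show "(\<Sum>u\<in>D. (of_bool (x \<in> N u) :: nat)) = card (D \<inter> {u. x \<in> N u})"
      using sob[OF assms(2), of "\<lambda>u. x \<in> N u"] by simp
  qed simp
  finally show ?thesis .
qed



lemma exact_cover:
  assumes "finite V" "finite D" "\<And>u. u \<in> D \<Longrightarrow> N u \<subseteq> V"
    "card V = card D * M" "\<And>u. u \<in> D \<Longrightarrow> card (N u) \<le> M"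
    "\<And>x. x \<in> V \<Longrightarrow> \<exists>u\<in>D. x \<in> N u"
  shows "\<forall>x\<in>V. card (D \<inter> {u. x \<in> N u}) = 1" "\<forall>u\<in>D. card (N u) = M"
proof -
  define c where "c x = card (D \<inter> {u. x \<in> N u})" for x
  have c1: "1 \<le> c x" if xV: "x \<in> V" for x
  proof -
    obtain u where "u \<in> D" "x \<in> N u" using assms(6) xV by blast
    then have "D \<inter> {u. x \<in> N u} \<noteq> {}" by blast
    then show ?thesis unfolding c_def using assms(2)
      by (simp add: Suc_le_eq card_gt_0_iff)
  qed
  have DC: "(\<Sum>u\<in>D. card (N u)) = (\<Sum>x\<in>V. c x)"
    unfolding c_def by (rule double_count[OF assms(1-3)])
  have S: "(\<Sum>u\<in>D. card (N u)) \<le> card V"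
    using sum_bounded_above[of D "\<lambda>u. card (N u)" M] assms(4,5) by (simp add: mult.commute)
  have V1: "card V = (\<Sum>x\<in>V. (1::nat))" by simp
  show "\<forall>x\<in>V. card (D \<inter> {u. x \<in> N u}) = 1"
  proof (rule ccontr)
    assume "\<not> ?thesis"
    then obtain x where "x \<in> V" "c x \<noteq> 1" unfolding c_def by blast
    then have "\<exists>a\<in>V. (1::nat) < c a" using c1 by force
    then have lt: "(\<Sum>x\<in>V. (1::nat)) < (\<Sum>x\<in>V. c x)"
      using c1 assms(1) by (intro sum_strict_mono_ex1) auto
    have "(\<Sum>x\<in>V. c x) \<le> (\<Sum>x\<in>V. (1::nat))" using DC S by simp
    then show False using lt by simp
  qed
  show "\<forall>u\<in>D. card (N u) = M"
  proof (rule ccontr)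
    assume "\<not> ?thesis"
    then obtain u where "u \<in> D" "card (N u) \<noteq> M" by blast
    then have "\<exists>a\<in>D. card (N a) < M" using assms(5) by force
    then have lt: "(\<Sum>u\<in>D. card (N u)) < (\<Sum>u\<in>D. M)"
      using assms(2,5) by (intro sum_strict_mono_ex1) auto
    have "(\<Sum>x\<in>V. (1::nat)) \<le> (\<Sum>x\<in>V. c x)"
      using c1 by (intro sum_mono) auto
    then have "card D * M \<le> (\<Sum>u\<in>D. card (N u))" using DC assms(4) by simp
    then show False using lt by simp
  qed
qed

definition G0 :: "nat \<Rightarrow> nat \<Rightarrow> nat graph" where
  "G0 n k = delete_vertex (circulant n k) 0"

lemma verts_G0: "verts (G0 n k) = {1..<n}"
  unfolding G0_def verts_del verts_circ by auto

lemma adj_G0: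
  assumes "x \<in> {1..<n}" "y \<in> {1..<n}" "k < n"
  shows "adj (G0 n k) x y \<longleftrightarrow> x \<noteq> y \<and> lc n k x y"
  using assms unfolding G0_def adj_del by (auto simp: adj_circ)

lemma adj_G0_sym: "adj (G0 n k) x y \<Longrightarrow> adj (G0 n k) y x"
  unfolding G0_def adj_del using adj_circ_sym by blast

lemma adj_G_sym: "adj (circulant n k) x y \<Longrightarrow> adj (circulant n k) y x"
  using adj_circ_sym by blast

lemma nbhd_G0:
  assumes "u \<in> {1..<n}" "k < n"
  shows "closed_nbhd (G0 n k) u = {b. 1 \<le> b \<and> b < n \<and> lc n k u b}"
proof -
  have "closed_nbhd (G0 n k) u = closed_nbhd (circulant n k) u - {0}"
    using assms unfolding G0_def by (intro nbhd_del) auto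
  also have "\<dots> = {b. 1 \<le> b \<and> b < n \<and> lc n k u b}"
    using assms by (auto simp: nbhd_circ)
  finally show ?thesis .
qed

lemma card_nbhd_G0:
  assumes "u \<in> {1..<n}" "2*k < n"
  shows "card (closed_nbhd (G0 n k) u) = (if u \<le> k \<or> n \<le> u + k then 2*k else 2*k+1)"
proof -
  have e: "closed_nbhd (G0 n k) u = closed_nbhd (circulant n k) u - {0}"
    using assms unfolding G0_def by (intro nbhd_del) auto
  have c: "card (closed_nbhd (circulant n k) u) = 2*k+1"
    using assms by (intro card_nbhd_circ) auto
  have "0 \<in> closed_nbhd (circulant n k) u \<longleftrightarrow> lc n k u 0"
    using assms by (auto simp: nbhd_circ)
  also have "\<dots> \<longleftrightarrow> u \<le> k \<or> n \<le> u + k" using assms by (auto simp: lc_def)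
  finally have z: "0 \<in> closed_nbhd (circulant n k) u \<longleftrightarrow> u \<le> k \<or> n \<le> u + k" .
  have f: "finite (closed_nbhd (circulant n k) u)"
    by (rule finite_subset[of _ "{0..<n}"]) (auto simp: closed_nbhd_def verts_circ)
  show ?thesis using e c z f by (simp add: card_Diff_singleton_if)
qed

lemma card_nbhd_G0_le:
  assumes "u \<in> {1..<n}" "2*k < n"
  shows "card (closed_nbhd (G0 n k) u) \<le> 2*k+1"
  using card_nbhd_G0[OF assms] by simp

lemma nbhd_G0_int:
  assumes "u \<in> {1..<n}" "2*k < n" "\<not> (u \<le> k \<or> n \<le> u + k)"
  shows "closed_nbhd (G0 n k) u = {u-k..u+k}"
  using assms by (auto simp: nbhd_G0 lc_def)

lemma dom_G0_lb:
  assumes "2*k < n" "dominating (G0 n k) D"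
  shows "n - 1 \<le> card D * (2*k+1)"
proof -
  have sub: "D \<subseteq> {1..<n}" using assms(2) by (simp add: dominating_def verts_G0)
  have "card (verts (G0 n k)) \<le> (\<Sum>u\<in>D. card (closed_nbhd (G0 n k) u))"
    using dom_card[OF assms(2) adj_G0_sym] by (simp add: verts_G0)
  also have "\<dots> \<le> card D * (2*k+1)"
  proof -
    have pt: "card (closed_nbhd (G0 n k) u) \<le> 2*k+1" if "u \<in> D" for u
      using that sub assms(1) card_nbhd_G0_le by blast
    show ?thesis using sum_bounded_above[of D _ "2*k+1", OF pt] by simp
  qed
  finally show ?thesis by (simp add: verts_G0)
qed

lemma dom_G_lb:
  assumes "2*k < n" "dominating (circulant n k) D"
  shows "n \<le> card D * (2*k+1)"
proof -
  have sub: "D \<subseteq> {0..<n}" using assms(2) by (simp add: dominating_def verts_circ)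
  have "card (verts (circulant n k)) \<le> (\<Sum>u\<in>D. card (closed_nbhd (circulant n k) u))"
    using dom_card[OF assms(2) adj_G_sym] by (simp add: verts_circ)
  also have "\<dots> \<le> card D * (2*k+1)"
  proof -
    have pt: "card (closed_nbhd (circulant n k) u) \<le> 2*k+1" if "u \<in> D" for u
    proof -
      have "u < n" using that sub by auto
      then show ?thesis using assms(1) card_nbhd_circ by simp
    qed
    show ?thesis using sum_bounded_above[of D _ "2*k+1", OF pt] by simp
  qed
  finally show ?thesis by (simp add: verts_circ)
qed

lemma dom_G0_of_cover:
  assumes "k < n" "D \<subseteq> {1..<n}" "\<And>x. x \<in> {1..<n} \<Longrightarrow> \<exists>c\<in>D. lc n k x c"
  shows "dominating (G0 n k) D"
  unfolding dominating_def verts_G0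
proof (intro conjI ballI assms(2))
  fix x assume x: "x \<in> {1..<n} - D"
  then obtain c where "c \<in> D" "lc n k x c" using assms(3) by blast
  then show "\<exists>u\<in>D. adj (G0 n k) x u" using x assms by (intro bexI[of _ c]) (auto simp: adj_G0)
qed

lemma dom_G_of_cover:
  assumes "k < n" "D \<subseteq> {0..<n}" "\<And>x. x \<in> {0..<n} \<Longrightarrow> \<exists>c\<in>D. lc n k x c"
  shows "dominating (circulant n k) D"
  unfolding dominating_def verts_circ
proof (intro conjI ballI assms(2))
  fix x assume x: "x \<in> {0..<n} - D"
  then obtain c where "c \<in> D" "lc n k x c" using assms(3) by blast
  then show "\<exists>u\<in>D. adj (circulant n k) x u" using x assms by (intro bexI[of _ c]) (auto simp: adj_circ)
qed

definition T :: "nat \<Rightarrow> nat \<Rightarrow> nat set" where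
  "T k q = (\<lambda>j. k+1+j*(2*k+1)) ` {..<q}"

lemma card_T: "card (T k q) = q"
proof -
  have "inj_on (\<lambda>j. k+1+j*(2*k+1)) {..<q}"
  proof (rule inj_onI)
    fix x y assume "k+1+x*(2*k+1) = k+1+y*(2*k+1)"
    then have "x*(2*k+1) = y*(2*k+1)" by (simp only: add_left_cancel)
    then show "x = y" using mult_right_cancel[of "2*k+1" x y] by simp
  qed
  then show ?thesis by (simp add: T_def card_image)
qed

lemma T_sub:
  assumes "q*(2*k+1) < n"
  shows "T k q \<subseteq> {1..<n}"
proof
  fix c assume "c \<in> T k q"
  then obtain j where j: "j < q" "c = k+1+j*(2*k+1)" by (auto simp: T_def)
  then have "Suc j * (2*k+1) \<le> q * (2*k+1)" by (intro mult_le_mono1) auto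
  then show "c \<in> {1..<n}" using j assms by auto
qed

lemma T_bound:
  assumes "c \<in> T k q"
  shows "c + k \<le> q*(2*k+1)" "k < c"
proof -
  obtain j where j: "j < q" "c = k+1+j*(2*k+1)" using assms by (auto simp: T_def)
  then have "Suc j * (2*k+1) \<le> q * (2*k+1)" by (intro mult_le_mono1) auto
  then show "c + k \<le> q*(2*k+1)" "k < c" using j by auto
qed

lemma tile_cover:
  assumes "1 \<le> x" "x \<le> q*(2*k+1)"
  shows "\<exists>c\<in>T k q. x \<le> c + k \<and> c \<le> x + k"
proof -
  define m where "m = 2*k+1"
  define j where "j = (x - 1) div m"
  have m0: "0 < m" by (simp add: m_def)
  have a: "j * m \<le> x - 1" unfolding j_def by (rule div_times_less_eq_dividend)
  have b: "x - 1 < j * m + m"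
    unfolding j_def using m0 by (metis add.commute div_mult_mod_eq mod_less_divisor nat_add_left_cancel_less)
  have "j * m < q * m" using a assms by (simp add: m_def)
  then have "j < q" by simp
  then have "k+1+j*m \<in> T k q" by (auto simp: T_def m_def)
  moreover have "x \<le> (k+1+j*m) + k \<and> k+1+j*m \<le> x + k" using a b assms by (auto simp: m_def)
  ultimately show ?thesis by blast
qed

lemma nbhd_sym:
  assumes "\<And>a b. adj H a b \<Longrightarrow> adj H b a" "x \<in> verts H" "u \<in> verts H"
  shows "u \<in> closed_nbhd H x \<longleftrightarrow> x \<in> closed_nbhd H u"
  using assms unfolding closed_nbhd_def by auto

context
  fixes n k q :: nat
  assumes k2n: "2*k < n" and k1: "1 \<le> k" and nq: "n - 1 = q*(2*k+1)"
begin

lemma A_n: "n = q*(2*k+1) + 1"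
  using nq k2n by linarith

lemma A_dom: "dominating (G0 n k) (T k q)"
proof (rule dom_G0_of_cover)
  show "k < n" using k2n by simp
  show "T k q \<subseteq> {1..<n}" using A_n by (intro T_sub) simp
  fix x assume "x \<in> {1..<n}"
  then have "1 \<le> x" "x \<le> q*(2*k+1)" using A_n by auto
  then obtain c where "c \<in> T k q" "x \<le> c + k \<and> c \<le> x + k" using tile_cover by blast
  then show "\<exists>c\<in>T k q. lc n k x c" by (auto simp: lc_def)
qed

lemma A_lb: "dominating (G0 n k) D \<Longrightarrow> q \<le> card D"
  using dom_G0_lb[OF k2n] nq by (metis mult_le_cancel2 zero_less_Suc add.commute Suc_eq_plus1)

lemma A_domnum: "domination_number (G0 n k) = q"
  by (rule domnum_eq[OF _ A_dom card_T A_lb]) (auto simp: verts_G0)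

lemma A_gamma_T: "gamma_set (G0 n k) (T k q)"
  using A_dom A_domnum card_T by (simp add: gamma_set_def)

lemma A_gamma_cover:
  assumes "gamma_set (G0 n k) D"
  shows "\<forall>x\<in>{1..<n}. card (D \<inter> {u. x \<in> closed_nbhd (G0 n k) u}) = 1"
    "\<forall>u\<in>D. card (closed_nbhd (G0 n k) u) = 2*k+1"
proof -
  have dom: "dominating (G0 n k) D" and cD: "card D = q"
    using assms A_domnum by (auto simp: gamma_set_def)
  have sub: "D \<subseteq> {1..<n}" using dom by (simp add: dominating_def verts_G0)
  have fD: "finite D" using sub finite_subset by blast
  have cov: "{1..<n} \<subseteq> (\<Union>u\<in>D. closed_nbhd (G0 n k) u)"
    using dom_cover[OF dom adj_G0_sym] by (simp add: verts_G0)
  have le: "card (closed_nbhd (G0 n k) u) \<le> 2*k+1" if "u \<in> D" for u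
    using that sub k2n card_nbhd_G0_le by blast
  have cV: "card {1..<n} = card D * (2*k+1)" using cD nq by simp
  note ec = exact_cover[of "{1..<n}" D "closed_nbhd (G0 n k)" "2*k+1", OF _ fD _ cV le]
  have ns: "closed_nbhd (G0 n k) u \<subseteq> {1..<n}" for u
    by (auto simp: closed_nbhd_def verts_G0)
  show "\<forall>x\<in>{1..<n}. card (D \<inter> {u. x \<in> closed_nbhd (G0 n k) u}) = 1"
    using ec(1) ns cov by blast
  show "\<forall>u\<in>D. card (closed_nbhd (G0 n k) u) = 2*k+1"
    using ec(2) ns cov by blast
qed

lemma A_unique:
  assumes "gamma_set (G0 n k) D"
  shows "D = T k q"
proof -
  define m where "m = 2*k+1"
  define N where "N = closed_nbhd (G0 n k)"
  have dom: "dominating (G0 n k) D" and cD: "card D = q"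
    using assms A_domnum by (auto simp: gamma_set_def)
  have sub: "D \<subseteq> {1..<n}" using dom by (simp add: dominating_def verts_G0)
  note gc = A_gamma_cover[OF assms, folded N_def]
  have int: "k < u \<and> u + k < n" if "u \<in> D" for u
  proof -
    have "card (N u) = 2*k+1" using gc(2) that by blast
    then show ?thesis using card_nbhd_G0[of u n k] that sub k2n unfolding N_def
      by (auto split: if_splits)
  qed
  have Nint: "N u = {u-k..u+k}" if "u \<in> D" for u
    unfolding N_def using int[OF that] that sub k2n by (intro nbhd_G0_int) auto
  have uniq: "u = w" if "x \<in> {1..<n}" "u \<in> D" "w \<in> D" "x \<in> N u" "x \<in> N w" for x u w
  proof -
    have "card (D \<inter> {u. x \<in> N u}) = 1" using gc(1) that(1) by blast
    then obtain a where e: "D \<inter> {u. x \<in> N u} = {a}" by (rule card_1_singletonE)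
    have "u \<in> D \<inter> {u. x \<in> N u}" "w \<in> D \<inter> {u. x \<in> N u}" using that by auto
    then show ?thesis unfolding e by simp
  qed
  have cov: "\<exists>u\<in>D. x \<in> N u" if "x \<in> {1..<n}" for x
  proof -
    have "card (D \<inter> {u. x \<in> N u}) = 1" using gc(1) that by blast
    then obtain a where "D \<inter> {u. x \<in> N u} = {a}" by (rule card_1_singletonE)
    then show ?thesis by blast
  qed
  have claim: "u \<in> D \<longrightarrow> (\<exists>j. u = k+1+j*m)" for u
  proof (induction u rule: less_induct)
    case (less u)
    show ?case
    proof
      assume uD: "u \<in> D"
      note iu = int[OF uD]
      show "\<exists>j. u = k+1+j*m"
      proof (cases "u = k+1")
        case True then show ?thesis by (intro exI[of _ 0]) simp
      next
        case False
        define x where "x = u - k - 1"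
        have xV: "x \<in> {1..<n}" using iu False unfolding x_def by auto
        obtain w where wD: "w \<in> D" and xw: "x \<in> N w" using cov[OF xV] by blast
        have xw': "w - k \<le> x \<and> x \<le> w + k" using xw Nint[OF wD] by auto
        have iw: "k < w" using int[OF wD] by simp
        have "\<not> (u - k \<le> w + k)"
        proof
          assume H: "u - k \<le> w + k"
          have yV: "u - k \<in> {1..<n}" using iu by auto
          have "u - k \<in> N u" using Nint[OF uD] by auto
          moreover have "u - k \<in> N w" using Nint[OF wD] H xw' iu iw unfolding x_def by auto
          ultimately have "u = w" using uniq[OF yV uD wD] by blast
          then show False using xw Nint[OF uD] iu unfolding x_def by auto
        qed
        then have wu: "u = w + m" using xw' iu iw unfolding x_def m_def by auto
        then have "w < u" by (simp add: m_def)
        then obtain j where "w = k+1+j*m" using less.IH wD by blast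
        then show ?thesis using wu by (intro exI[of _ "Suc j"]) simp
      qed
    qed
  qed
  have "D \<subseteq> T k q"
  proof
    fix u assume uD: "u \<in> D"
    then obtain j where j: "u = k+1+j*m" using claim by blast
    have "u + k < n" using int[OF uD] by simp
    then have "Suc j * m < q * m + 1" using j A_n unfolding m_def by simp
    then have "Suc j * m \<le> q * m" by simp
    then have "j < q" unfolding m_def by (metis Suc_le_eq mult_le_cancel2 zero_less_Suc add.commute Suc_eq_plus1)
    then show "u \<in> T k q" using j unfolding T_def m_def by blast
  qed
  moreover have "finite (T k q)" unfolding T_def by simp
  ultimately show ?thesis using card_subset_eq cD card_T by metis
qed

lemma A_EDS: "efficient_dominating (G0 n k) (T k q)"
  unfolding efficient_dominating_def
proof (intro conjI ballI)
  show "T k q \<subseteq> verts (G0 n k)" using A_dom by (simp add: dominating_def)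
  fix x assume xV: "x \<in> verts (G0 n k)"
  have "closed_nbhd (G0 n k) x \<inter> T k q = T k q \<inter> {u. x \<in> closed_nbhd (G0 n k) u}"
    using nbhd_sym[OF adj_G0_sym xV] \<open>T k q \<subseteq> verts (G0 n k)\<close> by (auto simp: closed_nbhd_def)
  then show "card (closed_nbhd (G0 n k) x \<inter> T k q) = 1"
    using A_gamma_cover(1)[OF A_gamma_T] xV by (simp add: verts_G0)
qed

lemma A_G_lb: "dominating (circulant n k) D \<Longrightarrow> q + 1 \<le> card D"
proof (rule ccontr)
  assume "dominating (circulant n k) D" "\<not> q + 1 \<le> card D"
  then have "n \<le> card D * (2*k+1)" "card D \<le> q" using dom_G_lb[OF k2n] by auto
  moreover have "card D * (2*k+1) \<le> q * (2*k+1)" using calculation(2) by (rule mult_le_mono1)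
  ultimately show False using A_n by linarith
qed

lemma T_pos: "c \<in> T k q \<Longrightarrow> 1 < c"
  using T_bound(2)[of c k q] k1 by linarith

lemma A_G_dom:
  assumes "a \<in> {0, 1}"
  shows "dominating (circulant n k) (insert a (T k q))"
proof (rule dom_G_of_cover)
  show "k < n" using k2n by simp
  show "insert a (T k q) \<subseteq> {0..<n}" using A_n assms T_sub[of q k n] k1 k2n by auto
  fix x assume x: "x \<in> {0..<n}"
  show "\<exists>c\<in>insert a (T k q). lc n k x c"
  proof (cases "x = 0")
    case True then show ?thesis using assms k1 by (auto simp: lc_def)
  next
    case False
    then have "1 \<le> x" "x \<le> q*(2*k+1)" using A_n x by auto
    then obtain c where "c \<in> T k q" "x \<le> c + k \<and> c \<le> x + k" using tile_cover by blast
    then show ?thesis by (auto simp: lc_def)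
  qed
qed

lemma A_G_card:
  assumes "a \<in> {0, 1}"
  shows "card (insert a (T k q)) = q + 1"
proof -
  have "a \<notin> T k q" using assms T_pos by force
  moreover have "finite (T k q)" by (simp add: T_def)
  ultimately show ?thesis by (simp add: card_T)
qed

lemma A_G_domnum: "domination_number (circulant n k) = q + 1"
  by (rule domnum_eq[OF _ A_G_dom A_G_card A_G_lb]) (auto simp: verts_circ)

lemma A_G_two: "\<exists>D1 D2. D1 \<noteq> D2 \<and> gamma_set (circulant n k) D1 \<and> gamma_set (circulant n k) D2"
proof (intro exI conjI)
  show "insert 0 (T k q) \<noteq> insert 1 (T k q)" using T_pos by force
  show "gamma_set (circulant n k) (insert 0 (T k q))"
    unfolding gamma_set_def A_G_domnum using A_G_dom A_G_card by simp
  show "gamma_set (circulant n k) (insert 1 (T k q))"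
    unfolding gamma_set_def A_G_domnum using A_G_dom A_G_card by simp
qed

lemma A_G_noEDS: "\<not> efficient_dominating (circulant n k) D"
proof
  assume E: "efficient_dominating (circulant n k) D"
  define N where "N = closed_nbhd (circulant n k)"
  have sub: "D \<subseteq> {0..<n}" using E by (simp add: efficient_dominating_def verts_circ)
  have fD: "finite D" using sub finite_subset by blast
  have ns: "N u \<subseteq> {0..<n}" for u by (auto simp: N_def closed_nbhd_def verts_circ)
  have one: "card (D \<inter> {u. x \<in> N u}) = 1" if xV: "x \<in> {0..<n}" for x
  proof -
    have sy: "u \<in> N x \<longleftrightarrow> x \<in> N u" if "u \<in> D" for u
      unfolding N_def by (rule nbhd_sym) (use adj_G_sym that sub xV in \<open>auto simp: verts_circ\<close>)
    have "D \<inter> {u. x \<in> N u} = N x \<inter> D" using sy by blast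
    then show ?thesis using E xV unfolding N_def efficient_dominating_def verts_circ by auto
  qed
  have "(\<Sum>u\<in>D. card (N u)) = (\<Sum>x\<in>{0..<n}. card (D \<inter> {u. x \<in> N u}))"
    by (rule double_count[OF _ fD ns]) simp
  also have "\<dots> = n" using one by simp
  finally have s: "(\<Sum>u\<in>D. card (N u)) = n" .
  have "(\<Sum>u\<in>D. card (N u)) = (\<Sum>u\<in>D. 2*k+1)"
    using sub k2n card_nbhd_circ unfolding N_def by (intro sum.cong) auto
  then have "n = card D * (2*k+1)" using s by simp
  then have "(2*k+1) dvd n" by (metis dvd_triv_right)
  moreover have "(2*k+1) dvd (n - 1)" unfolding nq by (rule dvd_triv_right)
  ultimately have "(2*k+1) dvd (n - (n - 1))" by (rule dvd_diff_nat)
  moreover have "n - (n - 1) = 1" using k2n by simp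
  ultimately have "(2*k+1) dvd 1" by simp
  then have "2*k+1 = 1" by (rule nat_dvd_1_iff_1[THEN iffD1])
  then show False using k1 by simp
qed

end

context
  fixes n k :: nat
  assumes k2n: "2*k+1 < n" and k1: "1 \<le> k" and nd: "\<not> (2*k+1) dvd (n - 1)"
begin

definition qB where "qB = (n - 1) div (2*k+1)"
definition sB where "sB = (n - 1) mod (2*k+1)"
definition cB where "cB = min (qB*(2*k+1) + k + 1) (n - 1)"

lemma B_facts: "n - 1 = qB*(2*k+1) + sB" "1 \<le> sB" "sB \<le> 2*k" "1 \<le> qB"
proof -
  show e: "n - 1 = qB*(2*k+1) + sB" unfolding qB_def sB_def by (rule div_mult_mod_eq[symmetric])
  show "1 \<le> sB" using nd unfolding sB_def by (metis dvd_eq_mod_eq_0 less_one not_le)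
  have "sB < 2*k+1" unfolding sB_def by simp
  then show "sB \<le> 2*k" by simp
  show "1 \<le> qB"
  proof (rule ccontr)
    assume "\<not> 1 \<le> qB"
    then have "qB = 0" by simp
    then have "n - 1 = sB" using e by simp
    then show False using \<open>sB < 2*k+1\<close> k2n by simp
  qed
qed

lemma cB_props: "qB*(2*k+1) + 1 \<le> cB" "cB \<le> qB*(2*k+1) + k + 1" "cB \<le> n - 1"
   "cB = qB*(2*k+1) + k + 1 \<or> cB = n - 1"
proof -
  have f: "n - 1 = qB*(2*k+1) + sB" "1 \<le> sB" using B_facts by auto
  show "qB*(2*k+1) + 1 \<le> cB" using f unfolding cB_def by simp
  show "cB \<le> qB*(2*k+1) + k + 1" "cB \<le> n - 1" "cB = qB*(2*k+1) + k + 1 \<or> cB = n - 1"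
    unfolding cB_def by auto
qed

lemma B_notin: "c \<in> {cB, cB - 1} \<Longrightarrow> c \<notin> T k qB \<and> c \<in> {1..<n}"
proof -
  assume c: "c \<in> {cB, cB - 1}"
  define P where "P = qB*(2*k+1)"
  have "1 * (2*k+1) \<le> qB*(2*k+1)" using B_facts(4) by (rule mult_le_mono1)
  then have p: "P + 1 \<le> cB" "cB \<le> n - 1" "2*k+1 \<le> P" using cB_props unfolding P_def by auto
  have "P \<le> c" "c < n" using c p by auto
  moreover have "c \<notin> T k qB"
  proof
    assume "c \<in> T k qB"
    then have "c + k \<le> P" using T_bound(1) unfolding P_def by blast
    then show False using \<open>P \<le> c\<close> k1 by linarith
  qed
  ultimately show ?thesis using p by auto
qed

lemma B_cov:
  assumes "c \<in> {cB, cB - 1}"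
  shows "dominating (G0 n k) (insert c (T k qB))"
proof (rule dom_G0_of_cover)
  define P where "P = qB*(2*k+1)"
  have f: "n - 1 = P + sB" "sB \<le> 2*k"
    using B_facts unfolding P_def by auto
  have cb: "P + 1 \<le> cB" "cB \<le> P + k + 1" "cB = P + k + 1 \<or> cB = n - 1"
    using cB_props unfolding P_def by auto
  have c: "c = cB \<or> c = cB - 1" using assms by auto
  show "k < n" using k2n by simp
  have "qB*(2*k+1) < n" using B_facts by linarith
  then show "insert c (T k qB) \<subseteq> {1..<n}"
    using T_sub[of qB k n] B_notin[OF assms] by auto
  fix x assume x: "x \<in> {1..<n}"
  show "\<exists>c'\<in>insert c (T k qB). lc n k x c'"
  proof (cases "x \<le> P")
    case True
    then obtain c' where "c' \<in> T k qB" "x \<le> c' + k \<and> c' \<le> x + k"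
      using tile_cover[of x qB k] x unfolding P_def by auto
    then show ?thesis by (auto simp: lc_def)
  next
    case False
    have xx: "P < x" "x \<le> P + sB" using False x f by auto
    have "x \<le> c + k \<and> c \<le> x + k"
      using c cb xx f k1 by (elim disjE) linarith+
    then show ?thesis by (auto simp: lc_def)
  qed
qed

lemma B_card:
  assumes "c \<in> {cB, cB - 1}"
  shows "card (insert c (T k qB)) = qB + 1"
proof -
  have "c \<notin> T k qB" using B_notin[OF assms] by blast
  moreover have "finite (T k qB)" by (simp add: T_def)
  ultimately show ?thesis by (simp add: card_T)
qed

lemma B_lb: "dominating (G0 n k) D \<Longrightarrow> qB + 1 \<le> card D"
proof (rule ccontr)
  assume "dominating (G0 n k) D" "\<not> qB + 1 \<le> card D"
  then have "n - 1 \<le> card D * (2*k+1)" "card D \<le> qB" using dom_G0_lb[of k n] k2n by auto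
  moreover have "card D * (2*k+1) \<le> qB * (2*k+1)" using calculation(2) by (rule mult_le_mono1)
  ultimately show False using B_facts by linarith
qed

lemma B_domnum: "domination_number (G0 n k) = qB + 1"
  by (rule domnum_eq[OF _ B_cov[of cB] B_card[of cB] B_lb]) (auto simp: verts_G0)

lemma B_not_unique: "\<not> (\<exists>!D. gamma_set (G0 n k) D)"
proof
  assume "\<exists>!D. gamma_set (G0 n k) D"
  moreover have "gamma_set (G0 n k) (insert cB (T k qB))"
    unfolding gamma_set_def B_domnum using B_cov B_card by simp
  moreover have "gamma_set (G0 n k) (insert (cB - 1) (T k qB))"
    unfolding gamma_set_def B_domnum using B_cov B_card by simp
  ultimately have "insert cB (T k qB) = insert (cB - 1) (T k qB)" by blast
  moreover have "cB \<notin> T k qB" using B_notin by blast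
  moreover have "cB \<noteq> cB - 1" using cB_props B_facts by auto
  ultimately show False by blast
qed

end

locale giso =
  fixes G H :: "'a graph" and f :: "'a \<Rightarrow> 'a"
  assumes bij: "bij_betw f (verts G) (verts H)"
    and adjp: "\<And>x y. x \<in> verts G \<Longrightarrow> y \<in> verts G \<Longrightarrow> adj H (f x) (f y) \<longleftrightarrow> adj G x y"
begin

lemma inj: "inj_on f (verts G)" using bij by (simp add: bij_betw_def)
lemma img: "f ` verts G = verts H" using bij by (simp add: bij_betw_def)

lemma nbhd: "x \<in> verts G \<Longrightarrow> closed_nbhd H (f x) = f ` closed_nbhd G x"
proof
  assume x: "x \<in> verts G"
  show "closed_nbhd H (f x) \<subseteq> f ` closed_nbhd G x"
  proof
    fix z assume z: "z \<in> closed_nbhd H (f x)"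
    then have "z \<in> verts H" by (simp add: closed_nbhd_def)
    then obtain y where y: "y \<in> verts G" "z = f y" using img by blast
    have "z = f x \<or> adj H (f x) z" using z by (simp add: closed_nbhd_def)
    then have "y = x \<or> adj G x y" using y x adjp inj by (auto dest: inj_onD)
    then show "z \<in> f ` closed_nbhd G x" using y by (auto simp: closed_nbhd_def)
  qed
  show "f ` closed_nbhd G x \<subseteq> closed_nbhd H (f x)"
    using x adjp img by (auto simp: closed_nbhd_def)
qed

lemma dom:
  assumes D: "D \<subseteq> verts G"
  shows "dominating H (f ` D) \<longleftrightarrow> dominating G D"
proof
  assume H: "dominating H (f ` D)"
  show "dominating G D" unfolding dominating_def
  proof (intro conjI ballI D)
    fix y assume y: "y \<in> verts G - D"
    then have "f y \<notin> f ` D" using inj D by (auto dest: inj_onD)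
    moreover have "f y \<in> verts H" using y img by auto
    ultimately have "f y \<in> verts H - f ` D" by blast
    then obtain u where "u \<in> D" "adj H (f y) (f u)" using H unfolding dominating_def by blast
    then show "\<exists>u\<in>D. adj G y u" using adjp y D by blast
  qed
next
  assume G: "dominating G D"
  show "dominating H (f ` D)" unfolding dominating_def
  proof (intro conjI ballI)
    show "f ` D \<subseteq> verts H" using D img by auto
    fix z assume z: "z \<in> verts H - f ` D"
    then obtain y where y: "y \<in> verts G" "z = f y" using img by blast
    then have "y \<notin> D" using z by auto
    then obtain u where "u \<in> D" "adj G y u" using G y by (auto simp: dominating_def)
    then show "\<exists>u\<in>f ` D. adj H z u" using adjp y D by blast
  qed
qed

lemma pre: "D' \<subseteq> verts H \<Longrightarrow> D' = f ` (verts G \<inter> f -` D') \<and> verts G \<inter> f -` D' \<subseteq> verts G"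
proof (intro conjI equalityI subsetI)
  fix x assume "D' \<subseteq> verts H" "x \<in> D'"
  then have "x \<in> f ` verts G" using img by blast
  then obtain y where "y \<in> verts G" "x = f y" by blast
  then show "x \<in> f ` (verts G \<inter> f -` D')" using \<open>x \<in> D'\<close> by blast
qed auto

lemma card: "D \<subseteq> verts G \<Longrightarrow> card (f ` D) = card D"
  using inj by (meson card_image inj_on_subset)

lemma domnum: "domination_number H = domination_number G"
proof -
  have "{card D | D. dominating H D} = {card D | D. dominating G D}"
  proof (intro equalityI subsetI)
    fix c assume "c \<in> {card D | D. dominating H D}"
    then obtain D' where D': "dominating H D'" "c = card D'" by blast
    then have "D' \<subseteq> verts H" by (simp add: dominating_def)
    note p = pre[OF this]
    obtain D where D: "D \<subseteq> verts G" "D' = f ` D" by (rule conjE[OF p]) blast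
    then have "dominating G D" using D'(1) dom[OF D(1)] by simp
    moreover have "c = card D" using D'(2) D card[OF D(1)] by simp
    ultimately show "c \<in> {card D | D. dominating G D}" by blast
  next
    fix c assume "c \<in> {card D | D. dominating G D}"
    then obtain D where D: "dominating G D" "c = card D" by blast
    then have s: "D \<subseteq> verts G" by (simp add: dominating_def)
    have "dominating H (f ` D)" using dom[OF s] D(1) by simp
    moreover have "c = card (f ` D)" using card[OF s] D(2) by simp
    ultimately show "c \<in> {card D | D. dominating H D}" by blast
  qed
  then show ?thesis by (simp add: domination_number_def)
qed

lemma gamma:
  assumes s: "D \<subseteq> verts G"
  shows "gamma_set H (f ` D) \<longleftrightarrow> gamma_set G D"
  unfolding gamma_set_def dom[OF s] card[OF s] domnum ..

lemma unique:
  assumes "\<exists>!D. gamma_set G D"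
  shows "\<exists>!D. gamma_set H D"
proof -
  obtain D0 where D0: "gamma_set G D0" "\<And>D. gamma_set G D \<Longrightarrow> D = D0"
    using assms by (elim ex1E) blast
  have sub0: "D0 \<subseteq> verts G" using D0(1) by (simp add: gamma_set_def dominating_def)
  show ?thesis
  proof (rule ex1I[of _ "f ` D0"])
    show "gamma_set H (f ` D0)" using gamma[OF sub0] D0(1) by simp
    fix D' assume D': "gamma_set H D'"
    then have "D' \<subseteq> verts H" by (simp add: gamma_set_def dominating_def)
    note p = pre[OF this]
    obtain D where D: "D \<subseteq> verts G" "D' = f ` D" by (rule conjE[OF p]) blast
    have "gamma_set H (f ` D)" using D' D(2) by simp
    then have "gamma_set G D" using gamma[OF D(1)] by simp
    then have "D = D0" by (rule D0(2))
    then show "D' = f ` D0" using D(2) by simp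
  qed
qed

lemma eds:
  assumes "efficient_dominating G D"
  shows "efficient_dominating H (f ` D)"
proof -
  have D: "D \<subseteq> verts G" using assms by (simp add: efficient_dominating_def)
  show ?thesis unfolding efficient_dominating_def
  proof (intro conjI ballI)
    show "f ` D \<subseteq> verts H" using D img by auto
    fix z assume "z \<in> verts H"
    then obtain x where x: "x \<in> verts G" "z = f x" using img by blast
    have ns: "closed_nbhd G x \<subseteq> verts G" by (auto simp: closed_nbhd_def)
    have "closed_nbhd H z \<inter> f ` D = f ` (closed_nbhd G x \<inter> D)"
      using nbhd[OF x(1)] x(2) inj_on_image_Int[OF inj ns D] by simp
    moreover have "card (f ` (closed_nbhd G x \<inter> D)) = card (closed_nbhd G x \<inter> D)"
      using card[of "closed_nbhd G x \<inter> D"] D by auto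
    ultimately show "card (closed_nbhd H z \<inter> f ` D) = 1"
      using assms x by (simp add: efficient_dominating_def)
  qed
qed

end

definition rot :: "nat \<Rightarrow> nat \<Rightarrow> nat \<Rightarrow> nat" where
  "rot n v x = (if x + v < n then x + v else x + v - n)"

lemma lc_shift1:
  assumes "a < n" "b < n" "ra + n = a + v \<or> (ra = a + v \<and> a + v < n)"
    "rb + n = b + v \<or> (rb = b + v \<and> b + v < n)" "ra < n" "rb < n" "lc n k ra rb"
  shows "lc n k a b"
  using assms(3,4) 
proof (elim disjE conjE)
  assume "ra + n = a + v" "rb + n = b + v" then show ?thesis using assms(1,2,5,6,7) unfolding lc_def by (elim disjE conjE; linarith)
next
  assume "ra + n = a + v" "rb = b + v" then show ?thesis using assms(1,2,5,6,7) unfolding lc_def by (elim disjE conjE; linarith)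
next
  assume "ra = a + v" "rb + n = b + v" then show ?thesis using assms(1,2,5,6,7) unfolding lc_def by (elim disjE conjE; linarith)
next
  assume "ra = a + v" "rb = b + v" then show ?thesis using assms(1,2,5,6,7) unfolding lc_def by (elim disjE conjE; linarith)
qed

lemma lc_shift2:
  assumes "a < n" "b < n" "ra + n = a + v \<or> (ra = a + v \<and> a + v < n)"
    "rb + n = b + v \<or> (rb = b + v \<and> b + v < n)" "ra < n" "rb < n" "lc n k a b"
  shows "lc n k ra rb"
  using assms(3,4) 
proof (elim disjE conjE)
  assume "ra + n = a + v" "rb + n = b + v" then show ?thesis using assms(1,2,5,6,7) unfolding lc_def by (elim disjE conjE; linarith)
next
  assume "ra + n = a + v" "rb = b + v" then show ?thesis using assms(1,2,5,6,7) unfolding lc_def by (elim disjE conjE; linarith)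
next
  assume "ra = a + v" "rb + n = b + v" then show ?thesis using assms(1,2,5,6,7) unfolding lc_def by (elim disjE conjE; linarith)
next
  assume "ra = a + v" "rb = b + v" then show ?thesis using assms(1,2,5,6,7) unfolding lc_def by (elim disjE conjE; linarith)
qed

lemma lc_shift:
  assumes "a < n" "b < n" "ra + n = a + v \<or> (ra = a + v \<and> a + v < n)"
    "rb + n = b + v \<or> (rb = b + v \<and> b + v < n)" "ra < n" "rb < n"
  shows "lc n k ra rb \<longleftrightarrow> lc n k a b"
proof
  show "lc n k ra rb \<Longrightarrow> lc n k a b" by (rule lc_shift1[OF assms])
  show "lc n k a b \<Longrightarrow> lc n k ra rb" by (rule lc_shift2[OF assms])
qed

lemma lc_rot:
  assumes "a < n" "b < n" "v < n"
  shows "lc n k (rot n v a) (rot n v b) \<longleftrightarrow> lc n k a b"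
proof (rule lc_shift)
  show "rot n v a + n = a + v \<or> (rot n v a = a + v \<and> a + v < n)" by (simp add: rot_def)
  show "rot n v b + n = b + v \<or> (rot n v b = b + v \<and> b + v < n)" by (simp add: rot_def)
  show "rot n v a < n" "rot n v b < n" using assms by (auto simp: rot_def)
qed (use assms in auto)

lemma rot_iso:
  assumes "v < n" "2*k < n"
  shows "giso (G0 n k) (delete_vertex (circulant n k) v) (rot n v)"
proof
  have vH: "verts (delete_vertex (circulant n k) v) = {0..<n} - {v}"
    by (simp add: verts_del verts_circ)
  show "bij_betw (rot n v) (verts (G0 n k)) (verts (delete_vertex (circulant n k) v))"
    unfolding vH verts_G0
  proof (rule bij_betw_imageI)
    show "inj_on (rot n v) {1..<n}" using assms by (auto simp: inj_on_def rot_def split: if_splits)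
    show "rot n v ` {1..<n} = {0..<n} - {v}"
    proof (intro equalityI subsetI)
      fix y assume "y \<in> rot n v ` {1..<n}"
      then show "y \<in> {0..<n} - {v}" using assms by (auto simp: rot_def split: if_splits)
    next
      fix y assume y: "y \<in> {0..<n} - {v}"
      define x where "x = (if v \<le> y then y - v else y + n - v)"
      have "x \<in> {1..<n}" "rot n v x = y" using y assms unfolding x_def rot_def by auto
      then show "y \<in> rot n v ` {1..<n}" by blast
    qed
  qed
  fix x y assume x: "x \<in> verts (G0 n k)" and y: "y \<in> verts (G0 n k)"
  then have xy: "x \<in> {1..<n}" "y \<in> {1..<n}" by (auto simp: verts_G0)
  have r: "rot n v x < n" "rot n v y < n" "rot n v x \<noteq> v" "rot n v y \<noteq> v"
    "rot n v x = rot n v y \<longleftrightarrow> x = y"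
    using xy assms by (auto simp: rot_def)
  show "adj (delete_vertex (circulant n k) v) (rot n v x) (rot n v y) \<longleftrightarrow> adj (G0 n k) x y"
    unfolding adj_del using r xy assms lc_rot[of x n y v k]
    by (simp add: adj_circ adj_G0)
qed

lemma degree_circ:
  assumes "a < n" "2*k < n"
  shows "degree (circulant n k) a = 2*k"
proof -
  have "{u \<in> verts (circulant n k). adj (circulant n k) a u} = closed_nbhd (circulant n k) a - {a}"
    using assms by (auto simp: closed_nbhd_def verts_circ adj_circ)
  moreover have "a \<in> closed_nbhd (circulant n k) a" using assms by (simp add: closed_nbhd_def verts_circ)
  moreover have "finite (closed_nbhd (circulant n k) a)"
    by (rule finite_subset[of _ "{0..<n}"]) (auto simp: closed_nbhd_def verts_circ)
  ultimately show ?thesis unfolding degree_def using card_nbhd_circ[OF assms] by simp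
qed

lemma maxdeg_circ:
  assumes "2*k < n"
  shows "max_degree (circulant n k) = 2*k"
proof -
  have "degree (circulant n k) ` verts (circulant n k) = {2*k}"
    using assms degree_circ by (auto simp: verts_circ)
  then show ?thesis by (simp add: max_degree_def)
qed


theorem proposition3p19:
  fixes n k :: nat
  assumes "n \<ge> 4" and "1 \<le> k" and "k < n div 2"
  shows "(hypo_unique (circulant n k) \<longleftrightarrow> (2 * k + 1) dvd (n - 1)) \<and>
         ((2 * k + 1) dvd (n - 1) \<longrightarrow>
            int n = (int (max_degree (circulant n k)) + 1) * (int (domination_number (circulant n k)) - 1) + 1
            \<and> hypo_efficient (circulant n k))"
proof -
  have k2: "2*k+1 < n" using assms(3) by linarith
  then have k2': "2*k < n" by simp
  have A: "hypo_unique (circulant n k) \<and> int n = (int (max_degree (circulant n k)) + 1) * (int (domination_number (circulant n k)) - 1) + 1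
            \<and> hypo_efficient (circulant n k)" if dv: "(2 * k + 1) dvd (n - 1)"
  proof -
    define q where "q = (n - 1) div (2*k+1)"
    have nq: "n - 1 = q*(2*k+1)" unfolding q_def by (simp only: dvd_div_mult_self[OF dv])
    have U0: "\<exists>!D. gamma_set (G0 n k) D"
      using A_gamma_T[OF k2' assms(2) nq] A_unique[OF k2' assms(2) nq] by blast
    have isov: "giso (G0 n k) (delete_vertex (circulant n k) v) (rot n v)" if "v \<in> verts (circulant n k)" for v
      using that k2' by (intro rot_iso) (auto simp: verts_circ)
    have hu: "hypo_unique (circulant n k)"
      unfolding hypo_unique_def
      using A_G_two[OF k2' assms(2) nq] giso.unique[OF isov U0] by blast
    have he: "hypo_efficient (circulant n k)"
      unfolding hypo_efficient_def
      using A_G_noEDS[OF k2' assms(2) nq] giso.eds[OF isov A_EDS[OF k2' assms(2) nq]] by blast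
    have "int n = (int (2*k) + 1) * (int (q + 1) - 1) + 1"
    proof -
      have nn: "n = q*(2*k+1) + 1" using nq k2 by linarith
      show ?thesis unfolding nn by (simp add: algebra_simps)
    qed
    then have "int n = (int (max_degree (circulant n k)) + 1) * (int (domination_number (circulant n k)) - 1) + 1"
      using maxdeg_circ[OF k2'] A_G_domnum[OF k2' assms(2) nq] by simp
    then show ?thesis using hu he by blast
  qed
  have B: "\<not> hypo_unique (circulant n k)" if nd: "\<not> (2 * k + 1) dvd (n - 1)"
  proof -
    have "\<not> (\<exists>!D. gamma_set (delete_vertex (circulant n k) 0) D)"
      using B_not_unique[OF k2 assms(2) nd] by (simp add: G0_def)
    moreover have "0 \<in> verts (circulant n k)" using k2 by (simp add: verts_circ)
    ultimately show ?thesis unfolding hypo_unique_def by blast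
  qed
  show ?thesis using A B by blast
qed

end
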